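(* Let $\mu$ be a positive Borel measure on $\mathbb{R}$, absolutely continuous w.r.t. Lebesgue measure, with finite moments, supported on a set $E$ with infinitely many points, $c\in\mathbb{R}\setminus E$, $N>0$, and assume the monic orthogonal polynomials $P_n$ of $\mu$ satisfy $xP_n=P_{n+1}+\beta_nP_n+\gamma_nP_{n-1}$ and $\sigma(x)P_n'(x)=a(x;n)P_n(x)+b(x;n)P_{n-1}(x)$ with polynomials $\sigma,a(\cdot;n),b(\cdot;n)$. Then $$Q_{n-1}^{c,N}(x)=A_2(n)P_n(x)+B_2(x;n)P_{n-1}(x),\qquad [Q_{n-1}^{c,N}]'(x)=C_2(x;n)P_n(x)+D_2(x;n)P_{n-1}(x),$$ where $$A_2(n)=\frac{-\Lambda_{n-1}^c}{\gamma_{n-1}},\qquad B_2(x;n)=\Lambda_{n-1}^c\Big(\frac{1}{\Lambda_{n-1}^c}+\frac{x-\beta_{n-1}}{\gamma_{n-1}}\Big),$$ $$C_2(x;n)=-\frac{\Lambda_{n-1}^c}{\sigma(x)}\Big(\frac{a(x;n)}{\gamma_{n-1}}+\frac{b(x;n-1)}{\gamma_{n-1}}\Big(\frac{1}{\Lambda_{n-1}^c}+\frac{x-\beta_{n-1}}{\gamma_{n-1}}\Big)\Big),$$ $$D_2(x;n)=\frac{\Lambda_{n-1}^c}{\sigma(x)}\Big[\frac{\sigma(x)-b(x;n)}{\gamma_{n-1}}+b(x;n-1)\Big(\frac{a(x;n-1)}{b(x;n-1)}+\frac{x-\beta_{n-1}}{\gamma_{n-1}}\Big)\Big(\frac{1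}{\Lambda_{n-1}^c}+\frac{x-\beta_{n-1}}{\gamma_{n-1}}\Big)\Big].$$
   Context: $\{Q_n^c\}$ is the MOPS for $\int fg\frac{1}{x-c}d\mu$; $\{Q_n^{c,N}\}$ is the MOPS for $\int fg\frac{1}{x-c}d\mu+Nf(c)g(c)$. $\Lambda_m^c$ is the constant with $Q_m^{c,N}=P_m+\Lambda_m^cP_{m-1}$, namely $\Lambda_m^c=\frac{\pi_{m-1}-r_{m-1}}{1+NB_m^c}-\pi_{m-1}$ with $\pi_{m-1}=P_m(c)/P_{m-1}(c)$, $r_{m-1}=F_m(c)/F_{m-1}(c)$, $F_m(s)=\int\frac{P_m(x)}{x-s}d\mu(x)$, $F_{-1}=1$, $B_m^c=\frac{-Q_m^c(c)P_{m-1}(c)}{\int P_{m-1}^2d\mu}$. *)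

theory Defs
  imports "HOL-Analysis.Analysis" "HOL-Computational_Algebra.Polynomial"
begin

definition msupport :: "real measure \<Rightarrow> real set" where
  "msupport \<mu> = {x. \<forall>e>0. emeasure \<mu> (ball x e) > 0}"

definition ip_mu :: "real measure \<Rightarrow> real poly \<Rightarrow> real poly \<Rightarrow> real" where
  "ip_mu \<mu> f g = (\<integral>x. poly f x * poly g x \<partial>\<mu>)"

definition ip_cN :: "real measure \<Rightarrow> real \<Rightarrow> real \<Rightarrow> real poly \<Rightarrow> real poly \<Rightarrow> real" where
  "ip_cN \<mu> c N f g = (\<integral>x. poly f x * poly g x / (x - c) \<partial>\<mu>) + N * poly f c * poly g c"

definition is_MOPS :: "(real poly \<Rightarrow> real poly \<Rightarrow> real) \<Rightarrow> (nat \<Rightarrow> real poly) \<Rightarrow> bool" where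
  "is_MOPS ip Q \<longleftrightarrow> (\<forall>n. degree (Q n) = n \<and> lead_coeff (Q n) = 1 \<and>
      (\<forall>q. degree q < n \<longrightarrow> ip (Q n) q = 0) \<and> ip (Q n) (Q n) \<noteq> 0)"

definition Lam :: "(nat \<Rightarrow> real poly) \<Rightarrow> (nat \<Rightarrow> real poly) \<Rightarrow> nat \<Rightarrow> real" where
  "Lam P Q m = (THE l. Q m = P m + smult l (P (m - 1)))"

end

theory Submission
  imports Defs
begin

lemma int_poly:
  assumes moments: "\<And>k::nat. integrable \<mu> (\<lambda>t::real. t ^ k)"
  shows "integrable \<mu> (\<lambda>x. poly p x)"
proof -
  have "integrable \<mu> (\<lambda>x. \<Sum>i\<le>degree p. coeff p i * x ^ i)"
    by (rule Bochner_Integration.integrable_sum, rule integrable_mult_right, rule moments)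
  thus ?thesis by (simp add: poly_altdef)
qed

lemma ip_diff1:
  assumes moments: "\<And>k::nat. integrable \<mu> (\<lambda>t::real. t ^ k)"
  shows "ip_mu \<mu> (f - g) h = ip_mu \<mu> f h - ip_mu \<mu> g h"
proof -
  have "ip_mu \<mu> (f - g) h = (\<integral>x. poly (f*h) x - poly (g*h) x \<partial>\<mu>)"
    unfolding ip_mu_def by (simp add: algebra_simps)
  also have "\<dots> = (\<integral>x. poly (f*h) x \<partial>\<mu>) - (\<integral>x. poly (g*h) x \<partial>\<mu>)"
    by (rule Bochner_Integration.integral_diff) (use int_poly[OF moments, of "f*h"] int_poly[OF moments, of "g*h"] in auto)
  finally show ?thesis unfolding ip_mu_def by simp
qed

lemma ip_smult1: "ip_mu \<mu> (smult s f) h = s * ip_mu \<mu> f h"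
  unfolding ip_mu_def by (simp add: mult.assoc)

lemma ip_sym: "ip_mu \<mu> f h = ip_mu \<mu> h f"
  unfolding ip_mu_def by (simp add: mult.commute)

lemma ip_zero1: "ip_mu \<mu> 0 h = 0"
  unfolding ip_mu_def by simp

lemma zero_lemma:
  assumes moments: "\<And>k::nat. integrable \<mu> (\<lambda>t::real. t ^ k)"
    and P: "is_MOPS (ip_mu \<mu>) P"
    and S: "S = 0 \<or> degree S < k"
    and orth: "\<And>q. degree q < k \<Longrightarrow> ip_mu \<mu> S q = 0"
  shows "S = 0"
proof (rule ccontr)
  assume nz: "S \<noteq> 0"
  define d where "d = degree S"
  define s where "s = lead_coeff S"
  have dk: "d < k" using S nz d_def by auto
  have s0: "s \<noteq> 0" using nz s_def by simp
  have Pd: "degree (P d) = d" "lead_coeff (P d) = 1" "ip_mu \<mu> (P d) (P d) \<noteq> 0"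
    "\<And>q. degree q < d \<Longrightarrow> ip_mu \<mu> (P d) q = 0"
    using P unfolding is_MOPS_def by blast+
  define T where "T = S - smult s (P d)"
  have "ip_mu \<mu> (P d) T = 0"
  proof (cases "T = 0")
    case True thus ?thesis using ip_zero1[of \<mu> "P d"] ip_sym[of \<mu> "P d" 0] by simp
  next
    case False
    have "degree T \<le> d" unfolding T_def d_def
      by (rule degree_diff_le) (simp_all add: Pd(1) d_def[symmetric])
    moreover have "coeff T d = 0" unfolding T_def using Pd s_def d_def by simp
    ultimately have "degree T < d"
    proof -
      assume a1: "degree T \<le> d" and a2: "coeff T d = 0"
      show ?thesis
      proof (rule ccontr)
        assume "\<not> degree T < d"
        hence "degree T = d" using a1 by simp
        hence "lead_coeff T = 0" using a2 by simp
        thus False using False by simp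
      qed
    qed
    thus ?thesis using Pd(4) by simp
  qed
  hence "ip_mu \<mu> T (P d) = 0" using ip_sym[of \<mu> T "P d"] by simp
  moreover have "S = T + smult s (P d)" unfolding T_def by simp
  hence "ip_mu \<mu> T (P d) = ip_mu \<mu> S (P d) - s * ip_mu \<mu> (P d) (P d)"
    using ip_diff1[OF moments, of S "smult s (P d)" "P d"] ip_smult1 T_def by simp
  moreover have "ip_mu \<mu> S (P d) = 0" using orth Pd(1) dk by simp
  ultimately show False using s0 Pd(3) by simp
qed

theorem lemma4:
  fixes \<mu> :: "real measure" and c N :: real
    and P Q :: "nat \<Rightarrow> real poly"
    and \<beta> \<gamma> :: "nat \<Rightarrow> real"
    and \<sigma> :: "real poly" and a b :: "nat \<Rightarrow> real poly"
    and n :: nat and x :: real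
  assumes sets_mu: "sets \<mu> = sets borel"
    and ac: "absolutely_continuous lborel \<mu>"
    and moments: "\<And>k::nat. integrable \<mu> (\<lambda>t. t ^ k)"
    and inf_supp: "infinite (msupport \<mu>)"
    and c_out: "c \<notin> msupport \<mu>"
    and N_pos: "N > 0"
    and P_mops: "is_MOPS (ip_mu \<mu>) P"
    and Q_mops: "is_MOPS (ip_cN \<mu> c N) Q"
    and rec: "\<And>m. m \<ge> 1 \<Longrightarrow>
               [:0, 1:] * P m = P (m + 1) + smult (\<beta> m) (P m) + smult (\<gamma> m) (P (m - 1))"
    and struct: "\<And>m. m \<ge> 1 \<Longrightarrow> \<sigma> * pderiv (P m) = a m * P m + b m * P (m - 1)"
    and n2: "n \<ge> 2"
    and Lam_nz: "Lam P Q (n - 1) \<noteq> 0"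
    and sigma_nz: "poly \<sigma> x \<noteq> 0"
    and b_nz: "poly (b (n - 1)) x \<noteq> 0"
  shows "let L = Lam P Q (n - 1); g = \<gamma> (n - 1); be = \<beta> (n - 1);
             A2 = - L / g;
             B2 = L * (1 / L + (x - be) / g);
             C2 = - (L / poly \<sigma> x) * (poly (a n) x / g
                     + poly (b (n - 1)) x / g * (1 / L + (x - be) / g));
             D2 = (L / poly \<sigma> x) * ((poly \<sigma> x - poly (b n) x) / g
                     + poly (b (n - 1)) x * (poly (a (n - 1)) x / poly (b (n - 1)) x + (x - be) / g)
                       * (1 / L + (x - be) / g))
         in poly (Q (n - 1)) x = A2 * poly (P n) x + B2 * poly (P (n - 1)) x
          \<and> poly (pderiv (Q (n - 1))) x = C2 * poly (P n) x + D2 * poly (P (n - 1)) x"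
proof -
  define m where "m = n - 1"
  have m1: "m \<ge> 1" and nm: "n = m + 1" and m2: "m - 1 = n - 2" using n2 m_def by auto
  have Pd: "\<And>k. degree (P k) = k" "\<And>k. lead_coeff (P k) = 1"
    "\<And>k. ip_mu \<mu> (P k) (P k) \<noteq> 0" "\<And>k q. degree q < k \<Longrightarrow> ip_mu \<mu> (P k) q = 0"
    using P_mops unfolding is_MOPS_def by blast+
  have Qd: "\<And>k. degree (Q k) = k" "\<And>k. lead_coeff (Q k) = 1"
    "\<And>k q. degree q < k \<Longrightarrow> ip_cN \<mu> c N (Q k) q = 0"
    using Q_mops unfolding is_MOPS_def by blast+
  have Pnz: "\<And>k. P k \<noteq> 0" using Pd(2) by (metis leading_coeff_0_iff zero_neq_one)
  have degcrit: "S = 0 \<or> degree S < k" if "\<And>i. i \<ge> k \<Longrightarrow> coeff S i = 0" for S :: "real poly" and k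
  proof (rule ccontr)
    assume "\<not> (S = 0 \<or> degree S < k)"
    hence "S \<noteq> 0" "degree S \<ge> k" by auto
    thus False using that[of "degree S"] by simp
  qed
  have cnull: "{c} \<in> null_sets \<mu>"
  proof -
    have "{c} \<in> null_sets lborel" by (simp add: null_sets_def)
    thus ?thesis using ac unfolding absolutely_continuous_def by auto
  qed
  have AEc: "AE x in \<mu>. x \<noteq> c"
    by (rule AE_I'[OF cnull]) auto
  have meas: "\<And>p. (\<lambda>x. poly p x) \<in> borel_measurable \<mu>"
  proof -
    fix p :: "real poly"
    have "(\<lambda>x. poly p x) \<in> borel_measurable borel"
      by (intro borel_measurable_continuous_onI continuous_intros)
    thus "(\<lambda>x. poly p x) \<in> borel_measurable \<mu>"
      using measurable_cong_sets[OF sets_mu refl, of borel] by metis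
  qed
  have ipQ: "ip_mu \<mu> (Q k) q = 0" if "degree q + 1 < k" for k q
  proof -
    have "ip_mu \<mu> (Q k) q = ip_cN \<mu> c N (Q k) ([:-c,1:] * q)"
    proof -
      have "ip_cN \<mu> c N (Q k) ([:-c,1:] * q) = (\<integral>x. poly (Q k) x * poly ([:-c,1:] * q) x / (x - c) \<partial>\<mu>)"
        unfolding ip_cN_def by simp
      also have "\<dots> = (\<integral>x. poly (Q k) x * poly q x \<partial>\<mu>)"
      proof (rule integral_cong_AE)
        show "(\<lambda>x. poly (Q k) x * poly ([:- c, 1:] * q) x / (x - c)) \<in> borel_measurable \<mu>"
        proof -
          have "(\<lambda>x. poly [:-c,1:] x) \<in> borel_measurable \<mu>" by (rule meas)
          hence "(\<lambda>x. x - c) \<in> borel_measurable \<mu>" by simp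
          thus ?thesis by (intro borel_measurable_divide borel_measurable_times meas)
        qed
        show "(\<lambda>x. poly (Q k) x * poly q x) \<in> borel_measurable \<mu>"
          by (intro borel_measurable_times meas)
        show "AE x in \<mu>. poly (Q k) x * poly ([:- c, 1:] * q) x / (x - c) = poly (Q k) x * poly q x"
          using AEc by eventually_elim (simp add: field_simps)
      qed
      finally show ?thesis unfolding ip_mu_def by simp
    qed
    also have "\<dots> = 0"
    proof (rule Qd(3))
      have "degree ([:-c,1:] * q) \<le> 1 + degree q"
        using degree_mult_le[of "[:-c,1:]" q] by simp
      thus "degree ([:-c,1:] * q) < k" using that by simp
    qed
    finally show ?thesis .
  qed
  define R where "R = Q m - P m"
  define l where "l = coeff R (m - 1)"
  define S where "S = R - smult l (P (m - 1))"
  have cR: "coeff R i = 0" if "i \<ge> m" for i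
  proof (cases "i = m")
    case True thus ?thesis unfolding R_def using Pd(1,2) Qd(1,2) by (metis coeff_diff diff_self)
  next
    case False thus ?thesis unfolding R_def using that Pd(1) Qd(1) by (simp add: coeff_eq_0)
  qed
  have "S = 0"
  proof (rule zero_lemma[OF moments P_mops])
    show "S = 0 \<or> degree S < m - 1"
    proof (rule degcrit)
      fix i assume i: "i \<ge> m - 1"
      show "coeff S i = 0"
      proof (cases "i = m - 1")
        case True thus ?thesis unfolding S_def l_def using Pd(2)[of "m-1"] Pd(1)[of "m-1"] by simp
      next
        case False
        hence "i \<ge> m" using i m1 by simp
        thus ?thesis unfolding S_def using cR Pd(1)[of "m-1"] m1 by (simp add: coeff_eq_0)
      qed
    qed
    fix q :: "real poly" assume q: "degree q < m - 1"
    have "ip_mu \<mu> S q = ip_mu \<mu> (Q m) q - ip_mu \<mu> (P m) q - l * ip_mu \<mu> (P (m-1)) q"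
      unfolding S_def R_def using ip_diff1[OF moments] ip_smult1 by simp
    also have "\<dots> = 0" using ipQ[of q m] Pd(4)[of q m] Pd(4)[of q "m-1"] q by simp
    finally show "ip_mu \<mu> S q = 0" .
  qed
  hence Qeq: "Q m = P m + smult l (P (m - 1))" unfolding S_def R_def by (simp add: algebra_simps)
  have Leq: "Lam P Q m = l"
    unfolding Lam_def
  proof (rule the_equality)
    show "Q m = P m + smult l (P (m - 1))" by (rule Qeq)
    fix l' assume "Q m = P m + smult l' (P (m - 1))"
    hence "smult l' (P (m-1)) = smult l (P (m-1))" using Qeq by simp
    hence "smult (l' - l) (P (m-1)) = 0" by (simp add: smult_diff_left)
    thus "l' = l" using Pnz by simp
  qed
  have recm: "[:0, 1:] * P m = P n + smult (\<beta> m) (P m) + smult (\<gamma> m) (P (m - 1))"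
    using rec[OF m1] nm by simp
  have g0: "\<gamma> m \<noteq> 0"
  proof
    assume g: "\<gamma> m = 0"
    define r where "r = [:-\<beta> m, 1:] * P (m - 1)"
    have Pn: "[:-\<beta> m, 1:] * P m = P n"
    proof -
      have "poly ([:-\<beta> m, 1:] * P m) t = poly (P n) t" for t
        using arg_cong[OF recm, of "\<lambda>p. poly p t"] g by (simp add: algebra_simps)
      thus ?thesis by (rule poly_ext)
    qed
    have "P m - r = 0 \<or> degree (P m - r) < m"
    proof (rule degcrit)
      fix i assume i: "i \<ge> m"
      have "degree r = degree [:-\<beta> m, 1:] + degree (P (m-1))" unfolding r_def
        by (rule degree_mult_eq) (auto simp: Pnz)
      hence dr: "degree r = m" using m1 Pd(1)[of "m-1"] by simp
      have lr: "lead_coeff r = 1" unfolding r_def using Pd(2)[of "m-1"]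
        by (simp only: lead_coeff_mult) simp
      show "coeff (P m - r) i = 0"
      proof (cases "i = m")
        case True thus ?thesis using dr lr Pd(1,2) by simp
      next
        case False thus ?thesis using i dr Pd(1) by (simp add: coeff_eq_0)
      qed
    qed
    hence "ip_mu \<mu> (P m - r) (P m) = 0"
    proof (elim disjE)
      assume "P m - r = 0" thus ?thesis by (simp add: ip_zero1)
    next
      assume "degree (P m - r) < m"
      hence "ip_mu \<mu> (P m) (P m - r) = 0" using Pd(4) by blast
      thus ?thesis using ip_sym[of \<mu> "P m - r" "P m"] by simp
    qed
    hence "ip_mu \<mu> r (P m) \<noteq> 0" using ip_diff1[OF moments, of "P m" r "P m"] Pd(3)[of m] by simp
    moreover have "ip_mu \<mu> r (P m) = ip_mu \<mu> (P n) (P (m - 1))"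
      unfolding ip_mu_def r_def Pn[symmetric] by (simp add: algebra_simps)
    moreover have "ip_mu \<mu> (P n) (P (m - 1)) = 0" using Pd(4)[of "P (m-1)" n] Pd(1) nm by simp
    ultimately show False by simp
  qed
  have Pm1: "smult (\<gamma> m) (P (m - 1)) = [:0, 1:] * P m - P n - smult (\<beta> m) (P m)"
    using recm by (simp add: algebra_simps)
  have Qid: "smult (\<gamma> m) (Q m) = smult (\<gamma> m) (P m) + smult l ([:0, 1:] * P m - P n - smult (\<beta> m) (P m))"
    unfolding Qeq Pm1[symmetric] by (simp add: smult_add_right mult.commute)
  have E1: "\<gamma> m * poly (Q m) x = \<gamma> m * poly (P m) x + l * (x * poly (P m) x - poly (P n) x - \<beta> m * poly (P m) x)"
    using arg_cong[OF Qid, of "\<lambda>p. poly p x"] by simp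
  have E2: "\<gamma> m * poly (pderiv (Q m)) x = \<gamma> m * poly (pderiv (P m)) x
       + l * (poly (P m) x + x * poly (pderiv (P m)) x - poly (pderiv (P n)) x - \<beta> m * poly (pderiv (P m)) x)"
    using arg_cong[OF Qid, of "\<lambda>p. poly (pderiv p) x"]
    by (simp add: pderiv_smult pderiv_add pderiv_diff pderiv_mult pderiv_pCons algebra_simps)
  have E3: "poly \<sigma> x * poly (pderiv (P n)) x = poly (a n) x * poly (P n) x + poly (b n) x * poly (P m) x"
    using arg_cong[OF struct[of n], of "\<lambda>p. poly p x"] n2 nm by simp
  have E4: "poly \<sigma> x * poly (pderiv (P m)) x = poly (a m) x * poly (P m) x + poly (b m) x * poly (P (m-1)) x"
    using arg_cong[OF struct[OF m1], of "\<lambda>p. poly p x"] by simp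
  have E5: "\<gamma> m * poly (P (m-1)) x = x * poly (P m) x - poly (P n) x - \<beta> m * poly (P m) x"
    using arg_cong[OF Pm1, of "\<lambda>p. poly p x"] by simp
  have Lnz: "l \<noteq> 0" using Lam_nz Leq m_def by simp
  have bnz: "poly (b m) x \<noteq> 0" using b_nz m_def by simp
  show ?thesis
    unfolding Let_def m_def[symmetric] Leq
  proof
    show "poly (Q m) x = - l / \<gamma> m * poly (P n) x + l * (1 / l + (x - \<beta> m) / \<gamma> m) * poly (P m) x"
    proof -
      have Q1: "poly (Q m) x = (\<gamma> m * poly (P m) x + l * (x * poly (P m) x - poly (P n) x - \<beta> m * poly (P m) x)) / \<gamma> m"
        using E1 g0 by (simp add: eq_divide_eq mult.commute)
      show ?thesis unfolding Q1 using g0 Lnz by (simp add: field_simps; simp add: algebra_simps)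
    qed
    show "poly (pderiv (Q m)) x = - (l / poly \<sigma> x) * (poly (a n) x / \<gamma> m + poly (b m) x / \<gamma> m * (1 / l + (x - \<beta> m) / \<gamma> m)) * poly (P n) x +
        l / poly \<sigma> x * ((poly \<sigma> x - poly (b n) x) / \<gamma> m + poly (b m) x * (poly (a m) x / poly (b m) x + (x - \<beta> m) / \<gamma> m) * (1 / l + (x - \<beta> m) / \<gamma> m)) * poly (P m) x"
    proof -
      have "poly \<sigma> x * (\<gamma> m * \<gamma> m) * poly (pderiv (Q m)) x =
        - l * (poly (a n) x * \<gamma> m + poly (b m) x * (\<gamma> m / l + (x - \<beta> m))) * poly (P n) x +
        l * ((poly \<sigma> x - poly (b n) x) * \<gamma> m + (poly (a m) x * \<gamma> m + poly (b m) x * (x - \<beta> m)) * (\<gamma> m / l + (x - \<beta> m))) * poly (P m) x"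
      proof -
        have "poly \<sigma> x * (\<gamma> m * \<gamma> m) * poly (pderiv (Q m)) x = \<gamma> m * (poly \<sigma> x * (\<gamma> m * poly (pderiv (Q m)) x))" by simp
        also have "\<dots> = \<gamma> m * ( \<gamma> m * (poly \<sigma> x * poly (pderiv (P m)) x)
          + l * (poly \<sigma> x * poly (P m) x + (x - \<beta> m) * (poly \<sigma> x * poly (pderiv (P m)) x) - poly \<sigma> x * poly (pderiv (P n)) x))"
          unfolding E2 by (simp add: algebra_simps)
        also have "\<dots> = \<gamma> m * ( \<gamma> m * (poly (a m) x * poly (P m) x) + poly (b m) x * (\<gamma> m * poly (P (m-1)) x))
          + l * (\<gamma> m * poly \<sigma> x * poly (P m) x + \<gamma> m * (x - \<beta> m) * (poly (a m) x * poly (P m) x) + (x - \<beta> m) * poly (b m) x * (\<gamma> m * poly (P (m-1)) x) - \<gamma> m * (poly (a n) x * poly (P n) x + poly (b n) x * poly (P m) x))"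
          unfolding E3 E4 by (simp add: algebra_simps)
        also have "\<dots> = - l * (poly (a n) x * \<gamma> m + poly (b m) x * (\<gamma> m / l + (x - \<beta> m))) * poly (P n) x +
        l * ((poly \<sigma> x - poly (b n) x) * \<gamma> m + (poly (a m) x * \<gamma> m + poly (b m) x * (x - \<beta> m)) * (\<gamma> m / l + (x - \<beta> m))) * poly (P m) x"
          unfolding E5 using Lnz by (simp add: field_simps; simp add: algebra_simps)
        finally show ?thesis .
      qed
      hence Q1: "poly (pderiv (Q m)) x = (- l * (poly (a n) x * \<gamma> m + poly (b m) x * (\<gamma> m / l + (x - \<beta> m))) * poly (P n) x +
        l * ((poly \<sigma> x - poly (b n) x) * \<gamma> m + (poly (a m) x * \<gamma> m + poly (b m) x * (x - \<beta> m)) * (\<gamma> m / l + (x - \<beta> m))) * poly (P m) x) / (poly \<sigma> x * (\<gamma> m * \<gamma> m))"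
        using g0 sigma_nz by (simp add: eq_divide_eq mult.commute)
      define X where "X = - l * (poly (a n) x * \<gamma> m + poly (b m) x * (\<gamma> m / l + (x - \<beta> m)))"
      define Y where "Y = l * ((poly \<sigma> x - poly (b n) x) * \<gamma> m + (poly (a m) x * \<gamma> m + poly (b m) x * (x - \<beta> m)) * (\<gamma> m / l + (x - \<beta> m)))"
      define Z where "Z = poly \<sigma> x * (\<gamma> m * \<gamma> m)"
      have Cq: "- (l / poly \<sigma> x) * (poly (a n) x / \<gamma> m + poly (b m) x / \<gamma> m * (1 / l + (x - \<beta> m) / \<gamma> m)) = X / Z"
        unfolding X_def Z_def using g0 Lnz sigma_nz by (simp add: field_simps)
      have Dq: "l / poly \<sigma> x * ((poly \<sigma> x - poly (b n) x) / \<gamma> m + poly (b m) x * (poly (a m) x / poly (b m) x + (x - \<beta> m) / \<gamma> m) * (1 / l + (x - \<beta> m) / \<gamma> m)) = Y / Z"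
        unfolding Y_def Z_def using g0 Lnz sigma_nz bnz by (simp add: field_simps)
      have "poly (pderiv (Q m)) x = (X * poly (P n) x + Y * poly (P m) x) / Z"
        unfolding Q1 X_def Y_def Z_def ..
      thus ?thesis unfolding Cq Dq by (simp add: add_divide_distrib)
    qed
  qed
qed

end
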